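(* Let $E$ be a group and $B$ a subgroup of finite index $n$, with right transversal $\{t_1,\dots,t_n\}$; for $x\in E$ write $t_{ix}$ for the transversal element with $Bt_ix=Bt_{ix}$. Let $\pi:B\to B/V(B)$ be the natural map, $b\mapsto\bar b$. Fix $y_1,\dots,y_r\in B$ and define $\tau:E\to B/V(B)$ by $$x\tau=\prod_{i=1}^n\big[w(\bar y_1,\dots,\bar y_r),(t_ixt_{ix}^{-1})\pi\big].$$ Then $\tau$ is a well-defined homomorphism which does not depend on the choice of the transversal. Moreover, if $x\in V^*(E)$ then $x\tau=\overline{[w(y_1,\dots,y_r),x^n]}$.
   Context: Commutators: $[a,b]=a^{-1}b^{-1}ab$, $[a_1,\dots,a_n]=[[a_1,\dots,a_{n-1}],a_n]$. Outer commutator words are defined inductively: each variable $x_i$ is one of weight $1$; if $u(x_1,\dots,x_s)$ and $v(x_{s+1},\dots,x_{s+t})$ are outer commutator words in disjoint variables, then $[u,v]$ is one of weight $s+t$. Let $w=w(x_1,\dots,x_r)$ be an outer commutator word and let $\mathcal V$ be the variety defined by the single law $[w(x_1,\dots,x_r),x_{r+1},x_{r+2}]$ (the centre-by-centre-by-$w$ variety). For a group $G$, $V(G)$ is the verbal subgroup generated by all values $[w(g_1,\dots,g_r),g_{r+1},g_{r+2}]$, and the marginal subgroup $V^*(G)$ is the set of $a\in G$ such that replacing any one argument $g_i$ by $g_ia$ does not change the value $[w(g_1,\dots,g_r),g_{r+1},g_{r+2}]$, for all $g_j\in G$. *)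

theory Defs
  imports "HOL-Algebra.Algebra"
begin

definition comm :: "('a, 'b) monoid_scheme \<Rightarrow> 'a \<Rightarrow> 'a \<Rightarrow> 'a" where
  "comm G a b = inv\<^bsub>G\<^esub> a \<otimes>\<^bsub>G\<^esub> inv\<^bsub>G\<^esub> b \<otimes>\<^bsub>G\<^esub> a \<otimes>\<^bsub>G\<^esub> b"

(* Outer commutator words: the shape (bracketing) of the word; the variables
   x_1,...,x_r are read off the leaves from left to right, so distinct leaves
   carry distinct variables (disjointness is built in). *)
datatype ocword = OVar | OComm ocword ocword

fun weight :: "ocword \<Rightarrow> nat" where
  "weight OVar = 1"
| "weight (OComm u v) = weight u + weight v"

fun oc_eval :: "('a, 'b) monoid_scheme \<Rightarrow> ocword \<Rightarrow> 'a list \<Rightarrow> 'a" where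
  "oc_eval G OVar gs = hd gs"
| "oc_eval G (OComm u v) gs =
     comm G (oc_eval G u (take (weight u) gs)) (oc_eval G v (drop (weight u) gs))"

(* value of the law [w(x_1,...,x_r), x_{r+1}, x_{r+2}] at a list gs of length r+2 *)
definition law_val :: "('a, 'b) monoid_scheme \<Rightarrow> ocword \<Rightarrow> 'a list \<Rightarrow> 'a" where
  "law_val G w gs =
     comm G (comm G (oc_eval G w (take (weight w) gs)) (gs ! weight w)) (gs ! (weight w + 1))"

definition verbal :: "('a, 'b) monoid_scheme \<Rightarrow> ocword \<Rightarrow> 'a set" where
  "verbal G w = generate G {law_val G w gs | gs.
       length gs = weight w + 2 \<and> set gs \<subseteq> carrier G}"

definition marginal :: "('a, 'b) monoid_scheme \<Rightarrow> ocword \<Rightarrow> 'a set" where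
  "marginal G w = {a \<in> carrier G. \<forall>gs. length gs = weight w + 2 \<and> set gs \<subseteq> carrier G \<longrightarrow>
       (\<forall>i < weight w + 2. law_val G w (gs[i := gs ! i \<otimes>\<^bsub>G\<^esub> a]) = law_val G w gs)}"

definition right_transversal :: "('a, 'b) monoid_scheme \<Rightarrow> 'a set \<Rightarrow> nat \<Rightarrow> (nat \<Rightarrow> 'a) \<Rightarrow> bool" where
  "right_transversal E B n t \<longleftrightarrow> (\<forall>i<n. t i \<in> carrier E) \<and>
       bij_betw (\<lambda>i. B #>\<^bsub>E\<^esub> t i) {..<n} (rcosets\<^bsub>E\<^esub> B)"

definition trep :: "('a, 'b) monoid_scheme \<Rightarrow> 'a set \<Rightarrow> nat \<Rightarrow> (nat \<Rightarrow> 'a) \<Rightarrow> 'a \<Rightarrow> 'a" where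
  "trep E B n t g = t (THE j. j < n \<and> B #>\<^bsub>E\<^esub> g = B #>\<^bsub>E\<^esub> t j)"

(* ordered product g_1 g_2 ... g_k in a (not necessarily commutative) monoid *)
definition list_prod :: "('a, 'b) monoid_scheme \<Rightarrow> 'a list \<Rightarrow> 'a" where
  "list_prod G xs = foldr (\<lambda>a b. a \<otimes>\<^bsub>G\<^esub> b) xs \<one>\<^bsub>G\<^esub>"

definition BmodV :: "('a, 'b) monoid_scheme \<Rightarrow> 'a set \<Rightarrow> ocword \<Rightarrow> 'a set monoid" where
  "BmodV E B w = (E\<lparr>carrier := B\<rparr>) Mod (verbal (E\<lparr>carrier := B\<rparr>) w)"

definition natpi :: "('a, 'b) monoid_scheme \<Rightarrow> 'a set \<Rightarrow> ocword \<Rightarrow> 'a \<Rightarrow> 'a set" where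
  "natpi E B w b = verbal (E\<lparr>carrier := B\<rparr>) w #>\<^bsub>E\<^esub> b"

definition tau :: "('a, 'b) monoid_scheme \<Rightarrow> 'a set \<Rightarrow> ocword \<Rightarrow> 'a list \<Rightarrow> nat \<Rightarrow> (nat \<Rightarrow> 'a) \<Rightarrow> 'a \<Rightarrow> 'a set" where
  "tau E B w ys n t x = list_prod (BmodV E B w)
     (map (\<lambda>i. comm (BmodV E B w)
                  (oc_eval (BmodV E B w) w (map (natpi E B w) ys))
                  (natpi E B w (t i \<otimes>\<^bsub>E\<^esub> x \<otimes>\<^bsub>E\<^esub> inv\<^bsub>E\<^esub> (trep E B n t (t i \<otimes>\<^bsub>E\<^esub> x)))))
          [0..<n])"

end

theory Submission
  imports Defs
begin


lemma weight_pos: "weight w \<ge> 1"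
  by (induction w) auto

lemma comm_closed: "group G \<Longrightarrow> a \<in> carrier G \<Longrightarrow> b \<in> carrier G \<Longrightarrow> comm G a b \<in> carrier G"
  unfolding comm_def by (simp add: group.inv_closed monoid.m_closed group.is_monoid)

lemma oc_eval_closed:
  assumes "group G"
  shows "length gs = weight w \<Longrightarrow> set gs \<subseteq> carrier G \<Longrightarrow> oc_eval G w gs \<in> carrier G"
proof (induction w arbitrary: gs)
  case OVar
  then show ?case by (cases gs) auto
next
  case (OComm u v)
  have "oc_eval G u (take (weight u) gs) \<in> carrier G"
    using OComm by (intro OComm.IH(1)) (auto dest: in_set_takeD)
  moreover have "oc_eval G v (drop (weight u) gs) \<in> carrier G"
    using OComm by (intro OComm.IH(2)) (auto dest: in_set_dropD)
  ultimately show ?case using comm_closed[OF assms] by simp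
qed

lemma hom_comm:
  assumes "group G" "group G'" "h \<in> hom G G'" "a \<in> carrier G" "b \<in> carrier G"
  shows "h (comm G a b) = comm G' (h a) (h b)"
proof -
  interpret group_hom G G' h using assms by (simp add: group_hom_def group_hom_axioms_def)
  show ?thesis using assms(4,5) unfolding comm_def by simp
qed

lemma hom_oc_eval:
  assumes "group G" "group G'" "h \<in> hom G G'"
  shows "length gs = weight w \<Longrightarrow> set gs \<subseteq> carrier G \<Longrightarrow> h (oc_eval G w gs) = oc_eval G' w (map h gs)"
proof (induction w arbitrary: gs)
  case OVar
  then show ?case by (cases gs) auto
next
  case (OComm u v)
  have 1: "h (oc_eval G u (take (weight u) gs)) = oc_eval G' u (take (weight u) (map h gs))"
    using OComm by (subst OComm.IH(1)) (auto dest: in_set_takeD simp: take_map)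
  have 2: "h (oc_eval G v (drop (weight u) gs)) = oc_eval G' v (drop (weight u) (map h gs))"
    using OComm by (subst OComm.IH(2)) (auto dest: in_set_dropD simp: drop_map)
  have "oc_eval G u (take (weight u) gs) \<in> carrier G"
    using OComm by (intro oc_eval_closed[OF assms(1)]) (auto dest: in_set_takeD)
  moreover have "oc_eval G v (drop (weight u) gs) \<in> carrier G"
    using OComm by (intro oc_eval_closed[OF assms(1)]) (auto dest: in_set_dropD)
  ultimately show ?case using hom_comm[OF assms] 1 2 by simp
qed

lemma hom_law_val:
  assumes "group G" "group G'" "h \<in> hom G G'" "length gs = weight w + 2" "set gs \<subseteq> carrier G"
  shows "h (law_val G w gs) = law_val G' w (map h gs)"
proof -
  have tk: "length (take (weight w) gs) = weight w" "set (take (weight w) gs) \<subseteq> carrier G"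
    using assms(4,5) by (auto dest: in_set_takeD)
  have g1: "gs ! weight w \<in> carrier G" "gs ! (weight w + 1) \<in> carrier G"
    using assms(4,5) by (auto simp: subset_iff)
  show ?thesis unfolding law_val_def
    using assms(4) tk g1
    by (simp add: hom_comm[OF assms(1-3)] comm_closed[OF assms(1)] oc_eval_closed[OF assms(1)]
          hom_oc_eval[OF assms(1-3)] take_map)
qed

lemma law_val_closed:
  assumes "group G" "length gs = weight w + 2" "set gs \<subseteq> carrier G"
  shows "law_val G w gs \<in> carrier G"
proof -
  have tk: "length (take (weight w) gs) = weight w" "set (take (weight w) gs) \<subseteq> carrier G"
    using assms by (auto dest: in_set_takeD)
  have g1: "gs ! weight w \<in> carrier G" "gs ! (weight w + 1) \<in> carrier G"
    using assms by (auto simp: subset_iff)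
  show ?thesis unfolding law_val_def
    using tk g1 by (simp add: comm_closed[OF assms(1)] oc_eval_closed[OF assms(1)])
qed

lemma incl_hom: "subgroup B G \<Longrightarrow> (\<lambda>x. x) \<in> hom (G\<lparr>carrier := B\<rparr>) G"
  by (auto simp: hom_def subgroup.mem_carrier)

lemma (in group) inv_cancel_l [simp]: "a \<in> carrier G \<Longrightarrow> z \<in> carrier G \<Longrightarrow> inv a \<otimes> (a \<otimes> z) = z"
  by (simp add: m_assoc[symmetric])

lemma (in group) inv_cancel_r [simp]: "a \<in> carrier G \<Longrightarrow> z \<in> carrier G \<Longrightarrow> a \<otimes> (inv a \<otimes> z) = z"
  by (simp add: m_assoc[symmetric])

lemma conj_hom: "group G \<Longrightarrow> g \<in> carrier G \<Longrightarrow> (\<lambda>x. g \<otimes>\<^bsub>G\<^esub> x \<otimes>\<^bsub>G\<^esub> inv\<^bsub>G\<^esub> g) \<in> hom G G"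
proof -
  assume "group G" "g \<in> carrier G"
  then interpret group G by simp
  show ?thesis using \<open>g \<in> carrier G\<close> by (intro homI) (simp_all add: m_assoc)
qed



definition cent :: "('a, 'b) monoid_scheme \<Rightarrow> 'a set" where
  "cent G = {z \<in> carrier G. \<forall>g\<in>carrier G. z \<otimes>\<^bsub>G\<^esub> g = g \<otimes>\<^bsub>G\<^esub> z}"

lemma (in group) comm_mult_right:
  assumes "u \<in> carrier G" "a \<in> carrier G" "b \<in> carrier G"
  shows "comm G u (a \<otimes> b) = comm G u b \<otimes> (inv b \<otimes> comm G u a \<otimes> b)"
  using assms unfolding comm_def by (simp add: m_assoc inv_mult_group)

lemma (in group) comm_one_cent:
  assumes "z \<in> carrier G" "\<And>g. g \<in> carrier G \<Longrightarrow> comm G z g = \<one>"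
  shows "z \<in> cent G"
proof -
  have "z \<otimes> g = g \<otimes> z" if g: "g \<in> carrier G" for g
  proof -
    have "inv z \<otimes> inv g \<otimes> z \<otimes> g = \<one>" using assms(2)[OF g] by (simp add: comm_def)
    hence "inv z \<otimes> inv g \<otimes> (z \<otimes> g) = \<one>" using g assms(1) by (simp add: m_assoc)
    hence "inv (z \<otimes> g) = inv z \<otimes> inv g" using g assms(1) by (intro inv_equality) auto
    hence "inv (inv (z \<otimes> g)) = inv (inv z \<otimes> inv g)" by simp
    thus ?thesis using g assms(1) by (simp add: inv_mult_group)
  qed
  thus ?thesis using assms(1) by (simp add: cent_def)
qed

lemma (in group) cent_commute: "z \<in> cent G \<Longrightarrow> g \<in> carrier G \<Longrightarrow> z \<otimes> g = g \<otimes> z"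
  by (simp add: cent_def)

lemma (in group) comm_mult_right_cent:
  assumes "u \<in> carrier G" "a \<in> carrier G" "b \<in> carrier G" "comm G u a \<in> cent G"
  shows "comm G u (a \<otimes> b) = comm G u a \<otimes> comm G u b"
proof -
  have z: "comm G u a \<in> carrier G" using assms(4) by (simp add: cent_def)
  have "inv b \<otimes> comm G u a \<otimes> b = inv b \<otimes> (comm G u a \<otimes> b)"
    using assms(3) z by (simp add: m_assoc)
  also have "\<dots> = inv b \<otimes> (b \<otimes> comm G u a)" using cent_commute[OF assms(4,3)] by simp
  also have "\<dots> = comm G u a" using assms(3) z by simp
  finally have "comm G u (a \<otimes> b) = comm G u b \<otimes> comm G u a"
    using comm_mult_right[OF assms(1-3)] by simp
  also have "\<dots> = comm G u a \<otimes> comm G u b"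
    using cent_commute[OF assms(4) comm_closed[OF is_group assms(1,3)]] by simp
  finally show ?thesis .
qed

lemma (in group) cent_subgroup: "subgroup (cent G) G"
proof (rule subgroupI)
  show "cent G \<subseteq> carrier G" by (auto simp: cent_def)
  show "cent G \<noteq> {}" using one_closed by (auto simp: cent_def)
next
  fix a assume a: "a \<in> cent G"
  hence ac: "a \<in> carrier G" by (simp add: cent_def)
  have "inv a \<otimes> g = g \<otimes> inv a" if g: "g \<in> carrier G" for g
  proof -
    have "a \<otimes> g = g \<otimes> a" using a g by (rule cent_commute)
    hence "inv a \<otimes> (a \<otimes> g) \<otimes> inv a = inv a \<otimes> (g \<otimes> a) \<otimes> inv a" by simp
    thus ?thesis using ac g by (simp add: m_assoc)
  qed
  thus "inv a \<in> cent G" using ac unfolding cent_def by blast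
next
  fix a b assume a: "a \<in> cent G" and b: "b \<in> cent G"
  have "a \<otimes> b \<otimes> g = g \<otimes> (a \<otimes> b)" if g: "g \<in> carrier G" for g
  proof -
    have ac: "a \<in> carrier G" "b \<in> carrier G" using a b by (auto simp: cent_def)
    have "a \<otimes> b \<otimes> g = a \<otimes> (g \<otimes> b)" using a b g ac by (simp add: m_assoc cent_commute[OF b g])
    also have "\<dots> = a \<otimes> g \<otimes> b" using a b g ac by (simp add: m_assoc)
    also have "\<dots> = g \<otimes> a \<otimes> b" using a b g ac by (simp add: cent_commute[OF a g])
    also have "\<dots> = g \<otimes> (a \<otimes> b)" using a b g ac by (simp add: m_assoc)
    finally show ?thesis .
  qed
  moreover have "a \<otimes> b \<in> carrier G" using a b unfolding cent_def by blast
  ultimately show "a \<otimes> b \<in> cent G" unfolding cent_def by blast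
qed

lemma (in group) cent_comm_group: "comm_group (G\<lparr>carrier := cent G\<rparr>)"
proof -
  interpret Z: group "G\<lparr>carrier := cent G\<rparr>"
    using subgroup.subgroup_is_group[OF cent_subgroup is_group] .
  show ?thesis
  proof (rule Z.group_comm_groupI)
    fix x y assume "x \<in> carrier (G\<lparr>carrier := cent G\<rparr>)" "y \<in> carrier (G\<lparr>carrier := cent G\<rparr>)"
    hence "x \<in> cent G" "y \<in> carrier G" unfolding cent_def by auto
    thus "x \<otimes>\<^bsub>G\<lparr>carrier := cent G\<rparr>\<^esub> y = y \<otimes>\<^bsub>G\<lparr>carrier := cent G\<rparr>\<^esub> x"
      using cent_commute by simp
  qed
qed

lemma list_prod_append:
  assumes "monoid G" "set xs \<subseteq> carrier G" "set ys \<subseteq> carrier G"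
  shows "list_prod G (xs @ ys) = list_prod G xs \<otimes>\<^bsub>G\<^esub> list_prod G ys"
  using assms(2)
proof (induction xs)
  case Nil
  have "list_prod G ys \<in> carrier G" using assms(3) unfolding list_prod_def
    by (induction ys) (auto simp: monoid.m_closed[OF assms(1)] monoid.one_closed[OF assms(1)])
  then show ?case by (simp add: list_prod_def monoid.l_one[OF assms(1)])
next
  case (Cons a xs)
  have c1: "list_prod G ys \<in> carrier G" using assms(3) unfolding list_prod_def
    by (induction ys) (auto simp: monoid.m_closed[OF assms(1)] monoid.one_closed[OF assms(1)])
  have c2: "list_prod G xs \<in> carrier G" using Cons.prems unfolding list_prod_def
    by (induction xs) (auto simp: monoid.m_closed[OF assms(1)] monoid.one_closed[OF assms(1)])
  show ?case using Cons c1 c2 by (simp add: list_prod_def monoid.m_assoc[OF assms(1)])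
qed

lemma (in group) list_prod_finprod:
  assumes "f ` {..<m} \<subseteq> cent G"
  shows "list_prod G (map f [0..<m]) = finprod (G\<lparr>carrier := cent G\<rparr>) f {..<m}"
  using assms
proof (induction m)
  case 0
  interpret Z: comm_group "G\<lparr>carrier := cent G\<rparr>" by (rule cent_comm_group)
  show ?case using Z.finprod_empty by (simp add: list_prod_def)
next
  case (Suc m)
  interpret Z: comm_group "G\<lparr>carrier := cent G\<rparr>" by (rule cent_comm_group)
  have cs: "cent G \<subseteq> carrier G" by (auto simp: cent_def)
  have fm: "f m \<in> cent G" using Suc.prems by auto
  have fs: "f \<in> {..<m} \<rightarrow> carrier (G\<lparr>carrier := cent G\<rparr>)" using Suc.prems by auto
  have fp: "finprod (G\<lparr>carrier := cent G\<rparr>) f {..<m} \<in> cent G" using Z.finprod_closed[OF fs] by simp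
  have "list_prod G (map f [0..<Suc m]) = list_prod G (map f [0..<m]) \<otimes> f m"
  proof -
    have "set (map f [0..<m]) \<subseteq> carrier G" using Suc.prems cs by force
    moreover have "set [f m] \<subseteq> carrier G" using fm cs by auto
    ultimately have "list_prod G (map f [0..<m] @ [f m]) = list_prod G (map f [0..<m]) \<otimes> list_prod G [f m]"
      by (rule list_prod_append[OF is_monoid])
    moreover have "list_prod G [f m] = f m" using fm cs by (auto simp: list_prod_def)
    ultimately show ?thesis by simp
  qed
  also have "\<dots> = finprod (G\<lparr>carrier := cent G\<rparr>) f {..<m} \<otimes> f m" using Suc.IH Suc.prems by force
  also have "\<dots> = f m \<otimes> finprod (G\<lparr>carrier := cent G\<rparr>) f {..<m}"
    using cent_commute[OF fm] fp cs by auto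
  also have "\<dots> = finprod (G\<lparr>carrier := cent G\<rparr>) f {..<Suc m}"
    using fm fs by (simp add: lessThan_Suc Z.finprod_insert)
  finally show ?case .
qed



locale qs = group G for G :: "('a,'b) monoid_scheme" (structure) +
  fixes B :: "'a set" and w :: ocword and ys :: "'a list"
  assumes subB: "subgroup B G" and lys: "length ys = weight w" and sys: "set ys \<subseteq> B"
begin

abbreviation "HH \<equiv> G\<lparr>carrier := B\<rparr>"
abbreviation "VV \<equiv> verbal HH w"
abbreviation "QQ \<equiv> BmodV G B w"
abbreviation "pp \<equiv> natpi G B w"

definition cc where "cc b = comm QQ (oc_eval QQ w (map pp ys)) (pp b)"

lemma grpH: "group HH"
  using subgroup.subgroup_is_group[OF subB is_group] .

lemma B_carrier: "B \<subseteq> carrier G" using subgroup.subset[OF subB] .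

lemma S_sub: "{law_val HH w gs | gs. length gs = weight w + 2 \<and> set gs \<subseteq> B} \<subseteq> B"
  using law_val_closed[OF grpH] by auto

lemma V_normal: "VV \<lhd> HH"
  unfolding verbal_def
proof (rule group.normal_generateI[OF grpH])
  show "{law_val HH w gs |gs. length gs = weight w + 2 \<and> set gs \<subseteq> carrier HH} \<subseteq> carrier HH"
    using S_sub by simp
next
  fix h g
  assume h: "h \<in> {law_val HH w gs |gs. length gs = weight w + 2 \<and> set gs \<subseteq> carrier HH}"
    and g: "g \<in> carrier HH"
  then obtain gs where gs: "h = law_val HH w gs" "length gs = weight w + 2" "set gs \<subseteq> carrier HH"
    by blast
  have hom: "(\<lambda>x. g \<otimes>\<^bsub>HH\<^esub> x \<otimes>\<^bsub>HH\<^esub> inv\<^bsub>HH\<^esub> g) \<in> hom HH HH"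
    by (rule conj_hom[OF grpH g])
  have "g \<otimes>\<^bsub>HH\<^esub> h \<otimes>\<^bsub>HH\<^esub> inv\<^bsub>HH\<^esub> g = law_val HH w (map (\<lambda>x. g \<otimes>\<^bsub>HH\<^esub> x \<otimes>\<^bsub>HH\<^esub> inv\<^bsub>HH\<^esub> g) gs)"
    using hom_law_val[OF grpH grpH hom gs(2,3)] gs(1) by simp
  moreover have "set (map (\<lambda>x. g \<otimes>\<^bsub>HH\<^esub> x \<otimes>\<^bsub>HH\<^esub> inv\<^bsub>HH\<^esub> g) gs) \<subseteq> carrier HH"
    using gs(3) hom_in_carrier[OF hom] by auto
  ultimately show "g \<otimes>\<^bsub>HH\<^esub> h \<otimes>\<^bsub>HH\<^esub> inv\<^bsub>HH\<^esub> g
      \<in> {law_val HH w gs |gs. length gs = weight w + 2 \<and> set gs \<subseteq> carrier HH}"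
    using gs(2) by (metis (mono_tags, lifting) length_map mem_Collect_eq)
qed

lemma grpQ: "group QQ"
  unfolding BmodV_def using normal.factorgroup_is_group[OF V_normal] .

lemma pp_eq: "pp = (\<lambda>a. VV #>\<^bsub>HH\<^esub> a)"
  by (rule ext) (simp add: natpi_def)

lemma pp_hom: "pp \<in> hom HH QQ"
  unfolding pp_eq BmodV_def using normal.r_coset_hom_Mod[OF V_normal] .

lemma pp_carrier: "b \<in> B \<Longrightarrow> pp b \<in> carrier QQ"
  using hom_in_carrier[OF pp_hom] by simp

lemma pp_mult: "a \<in> B \<Longrightarrow> b \<in> B \<Longrightarrow> pp (a \<otimes> b) = pp a \<otimes>\<^bsub>QQ\<^esub> pp b"
  using hom_mult[OF pp_hom, of a b] by simp

lemma Q_carrier: "carrier QQ = pp ` B"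
  unfolding pp_eq BmodV_def carrier_FactGroup by simp

lemma V_sub: "subgroup VV HH"
  using normal_imp_subgroup[OF V_normal] .

lemma pp_V: "v \<in> VV \<Longrightarrow> pp v = \<one>\<^bsub>QQ\<^esub>"
  unfolding pp_eq BmodV_def one_FactGroup
  using subgroup.rcos_const[OF V_sub grpH] by simp

lemma incl: "(\<lambda>x. x) \<in> hom HH G" using incl_hom[OF subB] .

lemma comm_HE: "a \<in> B \<Longrightarrow> b \<in> B \<Longrightarrow> comm HH a b = comm G a b"
  using hom_comm[OF grpH is_group incl, of a b] by simp

lemma oc_HE: "length gs = weight w' \<Longrightarrow> set gs \<subseteq> B \<Longrightarrow> oc_eval HH w' gs = oc_eval G w' gs"
  using hom_oc_eval[OF grpH is_group incl, of gs w'] by simp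

lemma W_B: "oc_eval G w ys \<in> B"
  using oc_eval_closed[OF grpH lys] sys oc_HE[OF lys sys] by simp

lemma W_BH: "oc_eval G w ys \<in> carrier HH" using W_B by simp

lemma Wq: "oc_eval QQ w (map pp ys) = pp (oc_eval G w ys)"
  using hom_oc_eval[OF grpH grpQ pp_hom lys] sys oc_HE[OF lys sys] by simp

lemma cc_eq: "b \<in> B \<Longrightarrow> cc b = pp (comm G (oc_eval G w ys) b)"
  unfolding cc_def Wq
  using hom_comm[OF grpH grpQ pp_hom W_BH, of b] comm_HE[OF W_B, of b] by simp

lemma cc_carrier: "b \<in> B \<Longrightarrow> cc b \<in> carrier QQ"
  unfolding cc_def Wq using comm_closed[OF grpQ] pp_carrier W_B by simp

lemma cc_law: "b \<in> B \<Longrightarrow> b' \<in> B \<Longrightarrow> comm QQ (cc b) (pp b') = \<one>\<^bsub>QQ\<^esub>"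
proof -
  assume b: "b \<in> B" and b': "b' \<in> B"
  let ?gs = "ys @ [b, b']"
  have len: "length ?gs = weight w + 2" using lys by simp
  have st: "set ?gs \<subseteq> carrier HH" using sys b b' by auto
  have "law_val HH w ?gs \<in> {law_val HH w gs | gs. length gs = weight w + 2 \<and> set gs \<subseteq> carrier HH}"
    using len st by blast
  hence "law_val HH w ?gs \<in> VV"
    unfolding verbal_def by (intro generate.incl) simp
  hence "pp (law_val HH w ?gs) = \<one>\<^bsub>QQ\<^esub>" by (rule pp_V)
  moreover have "pp (law_val HH w ?gs) = law_val QQ w (map pp ?gs)"
    using hom_law_val[OF grpH grpQ pp_hom len st] .
  moreover have "law_val QQ w (map pp ?gs) = comm QQ (cc b) (pp b')"
    unfolding law_val_def cc_def using lys by (simp add: nth_append)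
  ultimately show ?thesis by simp
qed

lemma cc_cent: "b \<in> B \<Longrightarrow> cc b \<in> cent QQ"
proof -
  assume b: "b \<in> B"
  show ?thesis
  proof (rule group.comm_one_cent[OF grpQ cc_carrier[OF b]])
    fix g assume "g \<in> carrier QQ"
    then obtain b' where "b' \<in> B" "g = pp b'" using Q_carrier by auto
    thus "comm QQ (cc b) g = \<one>\<^bsub>QQ\<^esub>" using cc_law[OF b] by simp
  qed
qed

lemma cc_mult: "a \<in> B \<Longrightarrow> b \<in> B \<Longrightarrow> cc (a \<otimes> b) = cc a \<otimes>\<^bsub>QQ\<^esub> cc b"
proof -
  assume a: "a \<in> B" and b: "b \<in> B"
  have u: "oc_eval QQ w (map pp ys) \<in> carrier QQ" unfolding Wq using pp_carrier W_B by simp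
  show ?thesis unfolding cc_def pp_mult[OF a b]
    using group.comm_mult_right_cent[OF grpQ u pp_carrier[OF a] pp_carrier[OF b]] cc_cent[OF a]
    unfolding cc_def by simp
qed

lemma cc_hom: "cc \<in> hom HH QQ"
  by (rule homI) (simp_all add: cc_carrier cc_mult)

lemma cc_inv: "a \<in> B \<Longrightarrow> cc (inv a) = inv\<^bsub>QQ\<^esub> (cc a)"
proof -
  assume a: "a \<in> B"
  interpret gh: group_hom HH QQ cc
    using grpH grpQ cc_hom by (simp add: group_hom_def group_hom_axioms_def)
  have "cc (inv\<^bsub>HH\<^esub> a) = inv\<^bsub>QQ\<^esub> (cc a)" using a by simp
  thus ?thesis using m_inv_consistent[OF subB a] by simp
qed

end


context qs begin

definition idx where "idx n t g = (THE j. j < n \<and> B #> g = B #> t j)"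

definition bb where "bb n t x i = t i \<otimes> x \<otimes> inv (trep G B n t (t i \<otimes> x))"

abbreviation "ZZ \<equiv> QQ\<lparr>carrier := cent QQ\<rparr>"

lemma trep_idx: "trep G B n t g = t (idx n t g)"
  by (simp add: trep_def idx_def)

lemma rt_carrier: "right_transversal G B n t \<Longrightarrow> i < n \<Longrightarrow> t i \<in> carrier G"
  by (simp add: right_transversal_def)

lemma rt_inj: "right_transversal G B n t \<Longrightarrow> i < n \<Longrightarrow> j < n \<Longrightarrow> B #> t i = B #> t j \<Longrightarrow> i = j"
  unfolding right_transversal_def bij_betw_def inj_on_def by blast

lemma rt_surj: "right_transversal G B n t \<Longrightarrow> g \<in> carrier G \<Longrightarrow> \<exists>j<n. B #> g = B #> t j"
proof -
  assume rt: "right_transversal G B n t" and g: "g \<in> carrier G"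
  have "B #> g \<in> rcosets B" using rcosetsI[OF B_carrier g] .
  hence "B #> g \<in> (\<lambda>i. B #> t i) ` {..<n}"
    using rt unfolding right_transversal_def bij_betw_def by simp
  thus ?thesis by auto
qed

lemma idx_prop:
  assumes rt: "right_transversal G B n t" and g: "g \<in> carrier G"
  shows "idx n t g < n \<and> B #> g = B #> t (idx n t g)"
proof -
  obtain j where j: "j < n" "B #> g = B #> t j" using rt_surj[OF rt g] by blast
  have "\<exists>!j. j < n \<and> B #> g = B #> t j"
  proof (rule ex1I[of _ j])
    show "j < n \<and> B #> g = B #> t j" using j by simp
    fix k assume "k < n \<and> B #> g = B #> t k"
    hence k: "k < n" "B #> g = B #> t k" by auto
    have "B #> t k = B #> t j" using k(2) j(2) by (rule trans[OF sym])
    thus "k = j" by (rule rt_inj[OF rt k(1) j(1)])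
  qed
  thus ?thesis unfolding idx_def by (rule theI')
qed

lemma idx_less: "right_transversal G B n t \<Longrightarrow> g \<in> carrier G \<Longrightarrow> idx n t g < n"
  using idx_prop by blast

lemma idx_coset: "right_transversal G B n t \<Longrightarrow> g \<in> carrier G \<Longrightarrow> B #> g = B #> t (idx n t g)"
  using idx_prop by blast

lemma idx_eq:
  assumes rt: "right_transversal G B n t" and g: "g \<in> carrier G" and j: "j < n" "B #> g = B #> t j"
  shows "idx n t g = j"
proof -
  have i: "idx n t g < n" "B #> g = B #> t (idx n t g)" using idx_prop[OF rt g] by auto
  have "B #> t (idx n t g) = B #> t j" using i(2) j(2) by (rule trans[OF sym])
  thus ?thesis by (rule rt_inj[OF rt i(1) j(1)])
qed

lemma coset_mem:
  assumes g: "g \<in> carrier G" and h: "h \<in> carrier G" and e: "B #> g = B #> h"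
  shows "g \<otimes> inv h \<in> B"
proof -
  have "g \<in> B #> h" using rcos_self[OF g subB] e by simp
  thus ?thesis using subgroup.rcos_module_imp[OF subB is_group h] by simp
qed

lemma bb_B:
  assumes rt: "right_transversal G B n t" and x: "x \<in> carrier G" and i: "i < n"
  shows "bb n t x i \<in> B"
proof -
  have g: "t i \<otimes> x \<in> carrier G" using rt_carrier[OF rt i] x by simp
  show ?thesis unfolding bb_def trep_idx
    using coset_mem[OF g rt_carrier[OF rt] ] idx_prop[OF rt g] by simp
qed

lemma coset_cancel:
  assumes "g \<in> carrier G" "h \<in> carrier G" "x \<in> carrier G" "B #> (g \<otimes> x) = B #> (h \<otimes> x)"
  shows "B #> g = B #> h"
proof -
  have e1: "(B #> (g \<otimes> x)) #> inv x = B #> g" using assms(1,3) B_carrier by (simp add: coset_mult_assoc m_assoc)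
  have e2: "(B #> (h \<otimes> x)) #> inv x = B #> h" using assms(2,3) B_carrier by (simp add: coset_mult_assoc m_assoc)
  show ?thesis using e1 e2 assms(4) by simp
qed

lemma perm_bij:
  assumes rt: "right_transversal G B n t" and x: "x \<in> carrier G"
  shows "bij_betw (\<lambda>i. idx n t (t i \<otimes> x)) {..<n} {..<n}"
proof -
  have into: "(\<lambda>i. idx n t (t i \<otimes> x)) ` {..<n} \<subseteq> {..<n}"
    using idx_less[OF rt] rt_carrier[OF rt] x by auto
  have inj: "inj_on (\<lambda>i. idx n t (t i \<otimes> x)) {..<n}"
  proof (rule inj_onI)
    fix i j assume i: "i \<in> {..<n}" and j: "j \<in> {..<n}" and e: "idx n t (t i \<otimes> x) = idx n t (t j \<otimes> x)"
    have ti: "t i \<in> carrier G" and tj: "t j \<in> carrier G" using i j rt_carrier[OF rt] by auto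
    have "B #> (t i \<otimes> x) = B #> (t j \<otimes> x)"
      using idx_coset[OF rt, of "t i \<otimes> x"] idx_coset[OF rt, of "t j \<otimes> x"] ti tj x e by simp
    hence "B #> t i = B #> t j" by (rule coset_cancel[OF ti tj x])
    thus "i = j" using rt_inj[OF rt] i j by simp
  qed
  show ?thesis unfolding bij_betw_def using endo_inj_surj[OF _ into inj] inj by simp
qed

lemma idx_mult:
  assumes rt: "right_transversal G B n t" and x: "x \<in> carrier G" and y: "y \<in> carrier G" and i: "i < n"
  shows "idx n t (t i \<otimes> (x \<otimes> y)) = idx n t (t (idx n t (t i \<otimes> x)) \<otimes> y)"
proof -
  let ?k = "idx n t (t i \<otimes> x)"
  have ti: "t i \<in> carrier G" using rt_carrier[OF rt i] .
  have tix: "t i \<otimes> x \<in> carrier G" using ti x by simp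
  have k: "?k < n" "B #> (t i \<otimes> x) = B #> t ?k" using idx_prop[OF rt tix] by auto
  have tk: "t ?k \<in> carrier G" using rt_carrier[OF rt k(1)] .
  let ?m = "idx n t (t ?k \<otimes> y)"
  have tky: "t ?k \<otimes> y \<in> carrier G" using tk y by simp
  have m: "?m < n" "B #> (t ?k \<otimes> y) = B #> t ?m" using idx_prop[OF rt tky] by auto
  have "B #> (t i \<otimes> (x \<otimes> y)) = (B #> (t i \<otimes> x)) #> y"
    using ti x y B_carrier by (simp add: coset_mult_assoc m_assoc)
  also have "\<dots> = (B #> t ?k) #> y" using k by simp
  also have "\<dots> = B #> t ?m" using m tk y B_carrier by (simp add: coset_mult_assoc)
  finally have e: "B #> (t i \<otimes> (x \<otimes> y)) = B #> t ?m" .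
  show ?thesis by (rule idx_eq[OF rt _ m(1) e]) (use ti x y in simp)
qed

lemma bb_mult:
  assumes rt: "right_transversal G B n t" and x: "x \<in> carrier G" and y: "y \<in> carrier G" and i: "i < n"
  shows "bb n t (x \<otimes> y) i = bb n t x i \<otimes> bb n t y (idx n t (t i \<otimes> x))"
proof -
  let ?k = "idx n t (t i \<otimes> x)"
  have ti: "t i \<in> carrier G" using rt_carrier[OF rt i] .
  have k: "?k < n" using idx_less[OF rt] ti x by simp
  have tk: "t ?k \<in> carrier G" using rt_carrier[OF rt k] .
  let ?m = "idx n t (t ?k \<otimes> y)"
  have m: "?m < n" using idx_less[OF rt] tk y by simp
  have tm: "t ?m \<in> carrier G" using rt_carrier[OF rt m] .
  show ?thesis unfolding bb_def trep_idx idx_mult[OF rt x y i]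
    using ti tk tm x y by (simp add: m_assoc)
qed

lemma tau_finprod:
  assumes rt: "right_transversal G B n t" and x: "x \<in> carrier G"
  shows "tau G B w ys n t x = finprod ZZ (\<lambda>i. cc (bb n t x i)) {..<n}"
proof -
  have "tau G B w ys n t x = list_prod QQ (map (\<lambda>i. cc (bb n t x i)) [0..<n])"
    unfolding tau_def cc_def bb_def ..
  also have "\<dots> = finprod ZZ (\<lambda>i. cc (bb n t x i)) {..<n}"
    by (rule group.list_prod_finprod[OF grpQ]) (use cc_cent bb_B[OF rt x] in auto)
  finally show ?thesis .
qed

lemma ZZ: "comm_group ZZ" using group.cent_comm_group[OF grpQ] .

lemma cc_bb_Z: "right_transversal G B n t \<Longrightarrow> x \<in> carrier G \<Longrightarrow> (\<lambda>i. cc (bb n t x i)) \<in> {..<n} \<rightarrow> carrier ZZ"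
  using cc_cent bb_B by auto

lemma tau_cent: "right_transversal G B n t \<Longrightarrow> x \<in> carrier G \<Longrightarrow> tau G B w ys n t x \<in> cent QQ"
proof -
  assume rt: "right_transversal G B n t" and x: "x \<in> carrier G"
  interpret Z: comm_group ZZ by (rule ZZ)
  show ?thesis using Z.finprod_closed[OF cc_bb_Z[OF rt x]] tau_finprod[OF rt x] by simp
qed

lemma cent_mult: "a \<in> cent QQ \<Longrightarrow> b \<in> cent QQ \<Longrightarrow> a \<otimes>\<^bsub>QQ\<^esub> b \<in> cent QQ"
  using subgroup.m_closed[OF group.cent_subgroup[OF grpQ]] .

lemma cent_inv: "a \<in> cent QQ \<Longrightarrow> inv\<^bsub>QQ\<^esub> a \<in> cent QQ"
  using subgroup.m_inv_closed[OF group.cent_subgroup[OF grpQ]] .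

lemma tau_hom:
  assumes rt: "right_transversal G B n t"
  shows "tau G B w ys n t \<in> hom G QQ"
proof (rule homI)
  fix x assume "x \<in> carrier G"
  thus "tau G B w ys n t x \<in> carrier QQ" using tau_cent[OF rt] by (simp add: cent_def)
next
  fix x y assume x: "x \<in> carrier G" and y: "y \<in> carrier G"
  interpret Z: comm_group ZZ by (rule ZZ)
  let ?s = "\<lambda>i. idx n t (t i \<otimes> x)"
  have bij: "bij_betw ?s {..<n} {..<n}" by (rule perm_bij[OF rt x])
  have "tau G B w ys n t (x \<otimes> y) = finprod ZZ (\<lambda>i. cc (bb n t x i) \<otimes>\<^bsub>ZZ\<^esub> cc (bb n t y (?s i))) {..<n}"
    unfolding tau_finprod[OF rt m_closed[OF x y]]
  proof (rule Z.finprod_cong')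
    show "(\<lambda>i. cc (bb n t x i) \<otimes>\<^bsub>ZZ\<^esub> cc (bb n t y (?s i))) \<in> {..<n} \<rightarrow> carrier ZZ"
      using cc_bb_Z[OF rt x] cc_bb_Z[OF rt y] bij_betwE[OF bij] by (auto intro!: cent_mult)
    fix i assume i: "i \<in> {..<n}"
    have "?s i < n" using bij_betwE[OF bij] i by auto
    thus "cc (bb n t (x \<otimes> y) i) = cc (bb n t x i) \<otimes>\<^bsub>ZZ\<^esub> cc (bb n t y (?s i))"
      using bb_mult[OF rt x y] i bb_B[OF rt x] bb_B[OF rt y] cc_mult by simp
  qed simp
  also have "\<dots> = finprod ZZ (\<lambda>i. cc (bb n t x i)) {..<n} \<otimes>\<^bsub>ZZ\<^esub> finprod ZZ (\<lambda>i. cc (bb n t y (?s i))) {..<n}"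
    using cc_bb_Z[OF rt x] cc_bb_Z[OF rt y] bij_betwE[OF bij] by (intro Z.finprod_multf) auto
  also have "finprod ZZ (\<lambda>i. cc (bb n t y (?s i))) {..<n} = finprod ZZ (\<lambda>i. cc (bb n t y i)) (?s ` {..<n})"
    using cc_bb_Z[OF rt y] bij_betw_imp_surj_on[OF bij] bij_betw_imp_inj_on[OF bij]
    by (intro Z.finprod_reindex[symmetric]) auto
  also have "?s ` {..<n} = {..<n}" using bij_betw_imp_surj_on[OF bij] .
  finally show "tau G B w ys n t (x \<otimes> y) = tau G B w ys n t x \<otimes>\<^bsub>QQ\<^esub> tau G B w ys n t y"
    unfolding tau_finprod[OF rt x] tau_finprod[OF rt y] by simp
qed

end


context qs begin

lemma tau_indep:
  assumes rt: "right_transversal G B n t" and rt': "right_transversal G B n t'" and x: "x \<in> carrier G"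
  shows "tau G B w ys n t' x = tau G B w ys n t x"
proof -
  interpret Z: comm_group ZZ by (rule ZZ)
  define \<rho> where "\<rho> i = idx n t (t' i)" for i
  define a where "a i = t' i \<otimes> inv (t (\<rho> i))" for i
  define k where "k i = idx n t' (t' i \<otimes> x)" for i
  have t'c: "\<And>i. i < n \<Longrightarrow> t' i \<in> carrier G" using rt_carrier[OF rt'] .
  have tc: "\<And>i. i < n \<Longrightarrow> t i \<in> carrier G" using rt_carrier[OF rt] .
  have \<rho>n: "\<And>i. i < n \<Longrightarrow> \<rho> i < n" unfolding \<rho>_def by (rule idx_less[OF rt t'c])
  have \<rho>c: "\<And>i. i < n \<Longrightarrow> B #> t' i = B #> t (\<rho> i)" unfolding \<rho>_def by (rule idx_coset[OF rt t'c])
  have aB: "\<And>i. i < n \<Longrightarrow> a i \<in> B" unfolding a_def by (rule coset_mem[OF t'c tc[OF \<rho>n] \<rho>c])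
  have aC: "\<And>i. i < n \<Longrightarrow> a i \<in> carrier G" using aB B_carrier by blast
  have t'a: "\<And>i. i < n \<Longrightarrow> t' i = a i \<otimes> t (\<rho> i)"
    unfolding a_def using t'c tc \<rho>n by (simp add: m_assoc)
  have kn: "\<And>i. i < n \<Longrightarrow> k i < n" unfolding k_def by (rule idx_less[OF rt']) (simp add: t'c x)
  have \<rho>k: "\<And>i. i < n \<Longrightarrow> \<rho> (k i) = idx n t (t (\<rho> i) \<otimes> x)"
  proof -
    fix i assume i: "i < n"
    have "B #> (t (\<rho> i) \<otimes> x) = (B #> t (\<rho> i)) #> x" using tc[OF \<rho>n[OF i]] x B_carrier by (simp add: coset_mult_assoc)
    also have "\<dots> = (B #> t' i) #> x" using \<rho>c[OF i] by simp
    also have "\<dots> = B #> (t' i \<otimes> x)" using t'c[OF i] x B_carrier by (simp add: coset_mult_assoc)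
    also have "\<dots> = B #> t' (k i)" unfolding k_def by (rule idx_coset[OF rt']) (simp add: t'c[OF i] x)
    also have "\<dots> = B #> t (\<rho> (k i))" using \<rho>c[OF kn[OF i]] .
    finally have e: "B #> (t (\<rho> i) \<otimes> x) = B #> t (\<rho> (k i))" .
    show "\<rho> (k i) = idx n t (t (\<rho> i) \<otimes> x)"
      by (rule idx_eq[OF rt _ \<rho>n[OF kn[OF i]] e, symmetric]) (use tc[OF \<rho>n[OF i]] x in simp)
  qed
  have bb': "\<And>i. i < n \<Longrightarrow> bb n t' x i = a i \<otimes> bb n t x (\<rho> i) \<otimes> inv (a (k i))"
  proof -
    fix i assume i: "i < n"
    have c1: "t (\<rho> i) \<in> carrier G" using tc[OF \<rho>n[OF i]] .
    have c2: "t (\<rho> (k i)) \<in> carrier G" using tc[OF \<rho>n[OF kn[OF i]]] .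
    have "bb n t' x i = t' i \<otimes> x \<otimes> inv (t' (k i))" unfolding bb_def trep_idx k_def ..
    also have "\<dots> = a i \<otimes> t (\<rho> i) \<otimes> x \<otimes> inv (a (k i) \<otimes> t (\<rho> (k i)))"
      using t'a[OF i] t'a[OF kn[OF i]] by simp
    also have "\<dots> = a i \<otimes> (t (\<rho> i) \<otimes> x \<otimes> inv (t (\<rho> (k i)))) \<otimes> inv (a (k i))"
      using aC[OF i] aC[OF kn[OF i]] c1 c2 x by (simp add: m_assoc inv_mult_group)
    also have "t (\<rho> i) \<otimes> x \<otimes> inv (t (\<rho> (k i))) = bb n t x (\<rho> i)"
      unfolding bb_def trep_idx \<rho>k[OF i] ..
    finally show "bb n t' x i = a i \<otimes> bb n t x (\<rho> i) \<otimes> inv (a (k i))" .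
  qed
  have ccb': "\<And>i. i < n \<Longrightarrow> cc (bb n t' x i) = cc (a i) \<otimes>\<^bsub>ZZ\<^esub> (cc (bb n t x (\<rho> i)) \<otimes>\<^bsub>ZZ\<^esub> inv\<^bsub>QQ\<^esub> (cc (a (k i))))"
  proof -
    fix i assume i: "i < n"
    have b1: "bb n t x (\<rho> i) \<in> B" using bb_B[OF rt x \<rho>n[OF i]] .
    have b2: "a (k i) \<in> B" using aB[OF kn[OF i]] .
    have b3: "inv (a (k i)) \<in> B" using subgroup.m_inv_closed[OF subB b2] .
    have "cc (bb n t' x i) = cc (a i) \<otimes>\<^bsub>QQ\<^esub> cc (bb n t x (\<rho> i)) \<otimes>\<^bsub>QQ\<^esub> cc (inv (a (k i)))"
      unfolding bb'[OF i] using aB[OF i] b1 b3 subgroup.m_closed[OF subB] cc_mult by simp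
    also have "\<dots> = cc (a i) \<otimes>\<^bsub>QQ\<^esub> (cc (bb n t x (\<rho> i)) \<otimes>\<^bsub>QQ\<^esub> inv\<^bsub>QQ\<^esub> (cc (a (k i))))"
      unfolding cc_inv[OF b2]
      by (rule monoid.m_assoc[OF group.is_monoid[OF grpQ]])
         (simp_all add: cc_carrier aB[OF i] b1 b2 group.inv_closed[OF grpQ])
    finally show "?thesis i" by simp
  qed
  have \<rho>bij: "bij_betw \<rho> {..<n} {..<n}"
  proof -
    have into: "\<rho> ` {..<n} \<subseteq> {..<n}" using \<rho>n by auto
    have inj: "inj_on \<rho> {..<n}"
    proof (rule inj_onI)
      fix i j assume i: "i \<in> {..<n}" and j: "j \<in> {..<n}" and e: "\<rho> i = \<rho> j"
      have "B #> t' i = B #> t' j" using \<rho>c i j e by simp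
      thus "i = j" using rt_inj[OF rt'] i j by simp
    qed
    show ?thesis unfolding bij_betw_def using endo_inj_surj[OF _ into inj] inj by simp
  qed
  have kbij: "bij_betw k {..<n} {..<n}" unfolding k_def using perm_bij[OF rt' x] .
  have A: "(\<lambda>i. cc (a i)) \<in> {..<n} \<rightarrow> carrier ZZ" using cc_cent aB by auto
  have Ai: "(\<lambda>i. inv\<^bsub>QQ\<^esub> (cc (a i))) \<in> {..<n} \<rightarrow> carrier ZZ" using cc_cent aB cent_inv by auto
  have Aik: "(\<lambda>i. inv\<^bsub>QQ\<^esub> (cc (a (k i)))) \<in> {..<n} \<rightarrow> carrier ZZ" using Ai kn by auto
  have P: "(\<lambda>i. cc (bb n t x i)) \<in> {..<n} \<rightarrow> carrier ZZ" using cc_bb_Z[OF rt x] .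
  have P\<rho>: "(\<lambda>i. cc (bb n t x (\<rho> i))) \<in> {..<n} \<rightarrow> carrier ZZ" using P \<rho>n by auto
  have "tau G B w ys n t' x = finprod ZZ (\<lambda>i. cc (a i) \<otimes>\<^bsub>ZZ\<^esub> (cc (bb n t x (\<rho> i)) \<otimes>\<^bsub>ZZ\<^esub> inv\<^bsub>QQ\<^esub> (cc (a (k i))))) {..<n}"
    unfolding tau_finprod[OF rt' x]
    by (rule Z.finprod_cong') (use ccb' A P\<rho> Aik in \<open>auto intro!: cent_mult simp: Pi_def\<close>)
  also have "\<dots> = finprod ZZ (\<lambda>i. cc (a i)) {..<n} \<otimes>\<^bsub>ZZ\<^esub>
      (finprod ZZ (\<lambda>i. cc (bb n t x (\<rho> i))) {..<n} \<otimes>\<^bsub>ZZ\<^esub> finprod ZZ (\<lambda>i. inv\<^bsub>QQ\<^esub> (cc (a (k i)))) {..<n})"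
  proof -
    have gh: "(\<lambda>i. cc (bb n t x (\<rho> i)) \<otimes>\<^bsub>ZZ\<^esub> inv\<^bsub>QQ\<^esub> (cc (a (k i)))) \<in> {..<n} \<rightarrow> carrier ZZ"
      using P\<rho> Aik by (auto intro!: cent_mult simp: Pi_def)
    show ?thesis by (simp only: Z.finprod_multf[OF A gh] Z.finprod_multf[OF P\<rho> Aik])
  qed
  also have "finprod ZZ (\<lambda>i. cc (bb n t x (\<rho> i))) {..<n} = finprod ZZ (\<lambda>i. cc (bb n t x i)) (\<rho> ` {..<n})"
    using P bij_betw_imp_surj_on[OF \<rho>bij] bij_betw_imp_inj_on[OF \<rho>bij]
    by (intro Z.finprod_reindex[symmetric]) auto
  also have "\<rho> ` {..<n} = {..<n}" using bij_betw_imp_surj_on[OF \<rho>bij] .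
  also have "finprod ZZ (\<lambda>i. inv\<^bsub>QQ\<^esub> (cc (a (k i)))) {..<n} = finprod ZZ (\<lambda>i. inv\<^bsub>QQ\<^esub> (cc (a i))) (k ` {..<n})"
    using Ai bij_betw_imp_surj_on[OF kbij] bij_betw_imp_inj_on[OF kbij]
    by (intro Z.finprod_reindex[symmetric]) auto
  also have "k ` {..<n} = {..<n}" using bij_betw_imp_surj_on[OF kbij] .
  finally have "tau G B w ys n t' x = finprod ZZ (\<lambda>i. cc (bb n t x i)) {..<n} \<otimes>\<^bsub>ZZ\<^esub>
      (finprod ZZ (\<lambda>i. cc (a i)) {..<n} \<otimes>\<^bsub>ZZ\<^esub> finprod ZZ (\<lambda>i. inv\<^bsub>QQ\<^esub> (cc (a i))) {..<n})"
    using Z.finprod_closed[OF A] Z.finprod_closed[OF Ai] Z.finprod_closed[OF P]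
    by (simp only: Z.m_lcomm)
  also have "finprod ZZ (\<lambda>i. cc (a i)) {..<n} \<otimes>\<^bsub>ZZ\<^esub> finprod ZZ (\<lambda>i. inv\<^bsub>QQ\<^esub> (cc (a i))) {..<n}
      = finprod ZZ (\<lambda>i. cc (a i) \<otimes>\<^bsub>ZZ\<^esub> inv\<^bsub>QQ\<^esub> (cc (a i))) {..<n}"
    by (simp only: Z.finprod_multf[OF A Ai])
  also have "\<dots> = \<one>\<^bsub>ZZ\<^esub>"
    by (rule Z.finprod_one_eqI) (use aB cc_carrier group.r_inv[OF grpQ] in simp)
  finally show ?thesis unfolding tau_finprod[OF rt x] using Z.finprod_closed[OF P] Z.r_one[simplified] by simp
qed

end


lemma (in group) comm_one_commute:
  assumes "a \<in> carrier G" "b \<in> carrier G" "comm G a b = \<one>"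
  shows "a \<otimes> b = b \<otimes> a"
proof -
  have "inv a \<otimes> inv b \<otimes> (a \<otimes> b) = \<one>" using assms by (simp add: comm_def m_assoc)
  hence "inv (a \<otimes> b) = inv a \<otimes> inv b" using assms by (intro inv_equality) auto
  hence "inv (inv (a \<otimes> b)) = inv (inv a \<otimes> inv b)" by simp
  thus ?thesis using assms by (simp add: inv_mult_group)
qed

lemma (in group) comm_mult_left:
  assumes "a \<in> carrier G" "b \<in> carrier G" "x \<in> carrier G"
  shows "comm G (a \<otimes> b) x = inv b \<otimes> comm G a x \<otimes> b \<otimes> comm G b x"
  using assms unfolding comm_def by (simp add: m_assoc inv_mult_group)

lemma (in group) comm_one_left [simp]: "b \<in> carrier G \<Longrightarrow> comm G \<one> b = \<one>"
  by (simp add: comm_def)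

lemma (in group) comm_one_right [simp]: "a \<in> carrier G \<Longrightarrow> comm G a \<one> = \<one>"
  by (simp add: comm_def m_assoc)

context qs begin

abbreviation "WW \<equiv> oc_eval G w ys"

lemma WC: "WW \<in> carrier G" using W_B B_carrier by blast

lemma ysC: "set ys \<subseteq> carrier G" using sys B_carrier by blast

lemma law_val_app: "a \<in> carrier G \<Longrightarrow> b \<in> carrier G \<Longrightarrow> law_val G w (ys @ [a, b]) = comm G (comm G WW a) b"
  unfolding law_val_def using lys by (simp add: nth_append)

lemma marg_C: "x \<in> marginal G w \<Longrightarrow> x \<in> carrier G"
  by (simp add: marginal_def)

lemma marg_M1:
  assumes x: "x \<in> marginal G w" and g: "g \<in> carrier G"
  shows "comm G (comm G WW x) g = \<one>"
proof -
  have xc: "x \<in> carrier G" using marg_C[OF x] .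
  let ?gs = "ys @ [\<one>, g]"
  have len: "length ?gs = weight w + 2" using lys by simp
  have st: "set ?gs \<subseteq> carrier G" using ysC g by auto
  have "law_val G w (?gs[weight w := ?gs ! weight w \<otimes> x]) = law_val G w ?gs"
    using x len st unfolding marginal_def by auto
  moreover have "?gs[weight w := ?gs ! weight w \<otimes> x] = ys @ [x, g]"
    using lys xc by (simp add: list_update_append nth_append)
  ultimately show ?thesis using law_val_app xc g WC by simp
qed

lemma marg_M2:
  assumes x: "x \<in> marginal G w" and k: "k \<in> carrier G"
  shows "comm G (comm G WW k) x = \<one>"
proof -
  have xc: "x \<in> carrier G" using marg_C[OF x] .
  let ?gs = "ys @ [k, \<one>]"
  have len: "length ?gs = weight w + 2" using lys by simp
  have st: "set ?gs \<subseteq> carrier G" using ysC k by auto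
  have "law_val G w (?gs[weight w + 1 := ?gs ! (weight w + 1) \<otimes> x]) = law_val G w ?gs"
    using x len st unfolding marginal_def by auto
  moreover have "?gs[weight w + 1 := ?gs ! (weight w + 1) \<otimes> x] = ys @ [k, x]"
    using lys xc by (simp add: list_update_append nth_append)
  ultimately show ?thesis using law_val_app xc k WC comm_closed[OF is_group] by simp
qed

lemma marg_one: "\<one> \<in> marginal G w"
proof -
  have "gs ! i \<otimes> \<one> = gs ! i" if "length gs = weight w + 2" "set gs \<subseteq> carrier G" "i < weight w + 2" for gs i
  proof -
    have "gs ! i \<in> carrier G" using that nth_mem by (metis subsetD)
    thus ?thesis by simp
  qed
  thus ?thesis unfolding marginal_def by simp
qed

lemma marg_mult:
  assumes x: "x \<in> marginal G w" and y: "y \<in> marginal G w"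
  shows "x \<otimes> y \<in> marginal G w"
proof -
  have xc: "x \<in> carrier G" and yc: "y \<in> carrier G" using marg_C x y by auto
  have "law_val G w (gs[i := gs ! i \<otimes> (x \<otimes> y)]) = law_val G w gs"
    if gs: "length gs = weight w + 2" "set gs \<subseteq> carrier G" and i: "i < weight w + 2" for gs i
  proof -
    let ?g1 = "gs[i := gs ! i \<otimes> x]"
    have gi: "gs ! i \<in> carrier G" using gs i by (auto simp: subset_iff)
    have l1: "length ?g1 = weight w + 2" using gs by simp
    have s1: "set ?g1 \<subseteq> carrier G" using gs gi xc by (intro set_update_subsetI) auto
    have "?g1[i := ?g1 ! i \<otimes> y] = gs[i := gs ! i \<otimes> (x \<otimes> y)]"
      using i gs gi xc yc by (simp add: m_assoc)
    moreover have "law_val G w (?g1[i := ?g1 ! i \<otimes> y]) = law_val G w ?g1"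
      using y l1 s1 i unfolding marginal_def by blast
    moreover have "law_val G w ?g1 = law_val G w gs"
      using x gs i unfolding marginal_def by blast
    ultimately show ?thesis by simp
  qed
  thus ?thesis using xc yc unfolding marginal_def by auto
qed

lemma marg_inv:
  assumes x: "x \<in> marginal G w"
  shows "inv x \<in> marginal G w"
proof -
  have xc: "x \<in> carrier G" using marg_C x by auto
  have "law_val G w (gs[i := gs ! i \<otimes> inv x]) = law_val G w gs"
    if gs: "length gs = weight w + 2" "set gs \<subseteq> carrier G" and i: "i < weight w + 2" for gs i
  proof -
    let ?g1 = "gs[i := gs ! i \<otimes> inv x]"
    have gi: "gs ! i \<in> carrier G" using gs i by (auto simp: subset_iff)
    have l1: "length ?g1 = weight w + 2" using gs by simp
    have s1: "set ?g1 \<subseteq> carrier G" using gs gi xc by (intro set_update_subsetI) auto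
    have "?g1[i := ?g1 ! i \<otimes> x] = gs"
      using i gs gi xc by (simp add: m_assoc)
    moreover have "law_val G w (?g1[i := ?g1 ! i \<otimes> x]) = law_val G w ?g1"
      using x l1 s1 i unfolding marginal_def by blast
    ultimately show ?thesis by simp
  qed
  thus ?thesis using xc unfolding marginal_def by auto
qed

lemma marg_subgroup: "subgroup (marginal G w) G"
proof (rule subgroupI)
  show "marginal G w \<subseteq> carrier G" using marg_C by blast
  show "marginal G w \<noteq> {}" using marg_one by blast
qed (auto intro: marg_inv marg_mult)

end


context qs begin

lemma phi_cent: "x \<in> marginal G w \<Longrightarrow> comm G WW x \<in> cent G"
  by (rule comm_one_cent) (auto simp: comm_closed[OF is_group] WC marg_C marg_M1)

lemma phi_mult:
  assumes x: "x \<in> marginal G w" and g: "g \<in> carrier G"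
  shows "comm G WW (g \<otimes> x) = comm G WW g \<otimes> comm G WW x"
proof -
  have xc: "x \<in> carrier G" using marg_C[OF x] .
  have cg: "comm G WW g \<in> carrier G" using comm_closed[OF is_group WC g] .
  have cx: "comm G WW x \<in> carrier G" using comm_closed[OF is_group WC xc] .
  have com: "comm G WW g \<otimes> x = x \<otimes> comm G WW g"
    using comm_one_commute[OF cg xc marg_M2[OF x g]] .
  have "inv x \<otimes> comm G WW g \<otimes> x = inv x \<otimes> (comm G WW g \<otimes> x)" using xc cg by (simp add: m_assoc)
  also have "\<dots> = inv x \<otimes> (x \<otimes> comm G WW g)" using com by simp
  also have "\<dots> = comm G WW g" using xc cg by simp
  finally have "comm G WW (g \<otimes> x) = comm G WW x \<otimes> comm G WW g"
    using comm_mult_right[OF WC g xc] by simp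
  also have "\<dots> = comm G WW g \<otimes> comm G WW x" using cent_commute[OF phi_cent[OF x] cg] .
  finally show ?thesis .
qed

lemma phi_conj:
  assumes x: "x \<in> marginal G w" and h: "h \<in> carrier G"
  shows "comm G WW (h \<otimes> x \<otimes> inv h) = comm G WW x"
proof -
  have xc: "x \<in> carrier G" using marg_C[OF x] .
  have hi: "inv h \<in> carrier G" using h by simp
  let ?f = "\<lambda>y. inv h \<otimes> y \<otimes> inv (inv h)"
  have fh: "?f \<in> hom G G" using conj_hom[OF is_group hi] .
  have y: "h \<otimes> x \<otimes> inv h \<in> carrier G" using h xc by simp
  have "?f (comm G WW (h \<otimes> x \<otimes> inv h)) = comm G (?f WW) (?f (h \<otimes> x \<otimes> inv h))"
    using hom_comm[OF is_group is_group fh WC y] .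
  moreover have "?f (h \<otimes> x \<otimes> inv h) = x" using h xc by (simp add: m_assoc)
  moreover have "?f WW = WW \<otimes> comm G WW h" using h WC by (simp add: comm_def m_assoc)
  ultimately have e1: "?f (comm G WW (h \<otimes> x \<otimes> inv h)) = comm G (WW \<otimes> comm G WW h) x" by simp
  let ?d = "comm G WW h"
  have dC: "?d \<in> carrier G" using comm_closed[OF is_group WC h] .
  have cx: "comm G WW x \<in> carrier G" using comm_closed[OF is_group WC xc] .
  have "comm G (WW \<otimes> ?d) x = inv ?d \<otimes> comm G WW x \<otimes> ?d \<otimes> comm G ?d x"
    using comm_mult_left[OF WC dC xc] .
  also have "comm G ?d x = \<one>" using marg_M2[OF x h] .
  also have "inv ?d \<otimes> comm G WW x \<otimes> ?d = inv ?d \<otimes> (comm G WW x \<otimes> ?d)" using dC cx by (simp add: m_assoc)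
  also have "comm G WW x \<otimes> ?d = ?d \<otimes> comm G WW x" using cent_commute[OF phi_cent[OF x] dC] .
  finally have e2: "comm G (WW \<otimes> ?d) x = comm G WW x" using dC cx by simp
  let ?c = "comm G WW (h \<otimes> x \<otimes> inv h)"
  have cC: "?c \<in> carrier G" using comm_closed[OF is_group WC y] .
  have "inv h \<otimes> ?c \<otimes> h = ?f ?c" using h by (simp only: inv_inv)
  also have "\<dots> = comm G WW x" using e1 e2 by (rule trans)
  finally have e3: "inv h \<otimes> ?c \<otimes> h = comm G WW x" .
  have "?c = h \<otimes> (inv h \<otimes> ?c \<otimes> h) \<otimes> inv h" using h cC by (simp add: m_assoc)
  also have "\<dots> = h \<otimes> comm G WW x \<otimes> inv h" by (simp only: e3)
  also have "\<dots> = comm G WW x \<otimes> h \<otimes> inv h" by (simp only: cent_commute[OF phi_cent[OF x] h])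
  also have "\<dots> = comm G WW x" using h cx by (simp add: m_assoc)
  finally show ?thesis .
qed

lemma phi_inv:
  assumes x: "x \<in> marginal G w"
  shows "comm G WW (inv x) = inv (comm G WW x)"
proof -
  have xc: "x \<in> carrier G" using marg_C[OF x] .
  have "comm G WW (inv x \<otimes> x) = comm G WW (inv x) \<otimes> comm G WW x"
    using phi_mult[OF x, of "inv x"] xc by (simp del: l_inv)
  hence "comm G WW (inv x) \<otimes> comm G WW x = \<one>" using xc WC by simp
  thus ?thesis using comm_closed[OF is_group WC] xc by (intro inv_equality[symmetric]) auto
qed

lemma marg_pow: "x \<in> marginal G w \<Longrightarrow> x [^] (k::nat) \<in> marginal G w"
  by (induction k) (auto simp: marg_one marg_mult)

lemma marg_ipow: "x \<in> marginal G w \<Longrightarrow> x [^] (e::int) \<in> marginal G w"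
  using subgroup_int_pow_closed[OF marg_subgroup] .

lemma phi_pow:
  assumes x: "x \<in> marginal G w"
  shows "comm G WW (x [^] (k::nat)) = comm G WW x [^] k"
proof (induction k)
  case 0
  then show ?case using WC by simp
next
  case (Suc k)
  have "comm G WW (x [^] Suc k) = comm G WW (x [^] k \<otimes> x)" by (simp only: nat_pow_Suc)
  also have "\<dots> = comm G WW (x [^] k) \<otimes> comm G WW x" by (rule phi_mult[OF x nat_pow_closed[OF marg_C[OF x]]])
  also have "\<dots> = comm G WW x [^] k \<otimes> comm G WW x" by (simp only: Suc)
  also have "\<dots> = comm G WW x [^] Suc k" by (simp only: nat_pow_Suc)
  finally show ?case .
qed

lemma ipow_neg_nat: "a \<in> carrier G \<Longrightarrow> (e::int) < 0 \<Longrightarrow> a [^] e = inv (a [^] nat (-e))"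
proof -
  assume a: "a \<in> carrier G" and e: "e < 0"
  have "e = - int (nat (-e))" using e by simp
  hence "a [^] e = a [^] (- int (nat (-e)))" by (rule arg_cong)
  also have "\<dots> = inv (a [^] nat (-e))" by (rule int_pow_neg_int[OF a])
  finally show ?thesis .
qed

lemma ipow_pos_nat: "(e::int) \<ge> 0 \<Longrightarrow> a [^] e = a [^] nat e"
  using pow_nat[of e G a] by simp

lemma phi_ipow:
  assumes x: "x \<in> marginal G w"
  shows "comm G WW (x [^] (e::int)) = comm G WW x [^] e"
proof (cases "e < 0")
  case True
  have xc: "x \<in> carrier G" using marg_C[OF x] .
  have "comm G WW (x [^] e) = comm G WW (inv (x [^] nat (-e)))" by (simp only: ipow_neg_nat[OF xc True])
  also have "\<dots> = inv (comm G WW (x [^] nat (-e)))" by (rule phi_inv[OF marg_pow[OF x]])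
  also have "\<dots> = inv (comm G WW x [^] nat (-e))" by (simp only: phi_pow[OF x])
  also have "\<dots> = comm G WW x [^] e" by (rule ipow_neg_nat[symmetric, OF comm_closed[OF is_group WC xc] True])
  finally show ?thesis .
next
  case False
  hence F: "e \<ge> 0" by simp
  have "comm G WW (x [^] e) = comm G WW (x [^] nat e)" by (simp only: ipow_pos_nat[OF F])
  also have "\<dots> = comm G WW x [^] nat e" by (rule phi_pow[OF x])
  also have "\<dots> = comm G WW x [^] e" by (simp only: ipow_pos_nat[OF F])
  finally show ?thesis .
qed

end


context qs begin

lemma list_prod_B: "set xs \<subseteq> B \<Longrightarrow> list_prod G xs \<in> B"
  by (induction xs) (auto simp: list_prod_def subgroup.one_closed[OF subB] subgroup.m_closed[OF subB])

lemma pp_list_prod: "set xs \<subseteq> B \<Longrightarrow> list_prod QQ (map pp xs) = pp (list_prod G xs)"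
proof (induction xs)
  case Nil
  have "\<one> \<in> VV" using subgroup.one_closed[OF V_sub] by simp
  then show ?case using pp_V by (simp add: list_prod_def BmodV_def)
next
  case (Cons a xs)
  have a: "a \<in> B" and xs: "set xs \<subseteq> B" using Cons.prems by auto
  have "list_prod QQ (map pp (a # xs)) = pp a \<otimes>\<^bsub>QQ\<^esub> list_prod QQ (map pp xs)"
    by (simp add: list_prod_def)
  also have "\<dots> = pp a \<otimes>\<^bsub>QQ\<^esub> pp (list_prod G xs)" using Cons.IH[OF xs] by simp
  also have "\<dots> = pp (a \<otimes> list_prod G xs)" using pp_mult[OF a list_prod_B[OF xs]] by simp
  also have "\<dots> = pp (list_prod G (a # xs))" by (simp add: list_prod_def)
  finally show ?case .
qed

lemma list_prod_pow:
  assumes z: "z \<in> carrier G"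
  shows "list_prod G (map (\<lambda>i. z [^] (f i :: int)) xs) = z [^] (sum_list (map f xs))"
proof (induction xs)
  case Nil
  then show ?case by (simp add: list_prod_def)
next
  case (Cons a xs)
  have "list_prod G (map (\<lambda>i. z [^] f i) (a # xs)) = z [^] f a \<otimes> list_prod G (map (\<lambda>i. z [^] f i) xs)"
    by (simp add: list_prod_def)
  also have "\<dots> = z [^] f a \<otimes> z [^] (sum_list (map f xs))" using Cons.IH by simp
  also have "\<dots> = z [^] (f a + sum_list (map f xs))" by (rule int_pow_mult[OF z, symmetric])
  finally show ?case by simp
qed

lemma comm_B: "a \<in> B \<Longrightarrow> b \<in> B \<Longrightarrow> comm G a b \<in> B"
  using comm_closed[OF grpH, of a b] comm_HE by simp

lemma ipow_shift: "x \<in> carrier G \<Longrightarrow> x [^] (a::int) \<otimes> x \<otimes> inv (x [^] (b::int)) = x [^] (a + 1 - b)"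
proof -
  assume x: "x \<in> carrier G"
  have "x [^] (a + 1 - b) = x [^] (a + 1) \<otimes> x [^] (- b)"
    using int_pow_mult[OF x, of "a + 1" "- b"] by simp
  also have "\<dots> = x [^] a \<otimes> x \<otimes> inv (x [^] b)"
    using int_pow_mult[OF x, of a 1] int_pow_neg[OF x, of b] x by simp
  finally show ?thesis by simp
qed

theorem tau_marginal:
  assumes rt: "right_transversal G B n t" and x: "x \<in> marginal G w"
  shows "comm G WW (x [^] n) \<in> B \<and> tau G B w ys n t x = pp (comm G WW (x [^] n))"
proof -
  have xc: "x \<in> carrier G" using marg_C[OF x] .
  have tc: "\<And>i. i < n \<Longrightarrow> t i \<in> carrier G" using rt_carrier[OF rt] .
  define R where "R j i \<longleftrightarrow> j < n \<and> (\<exists>e::int. B #> (t j \<otimes> x [^] e) = B #> t i)" for j i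
  define r where "r i = (LEAST j. R j i)" for i
  define d where "d i = (SOME e::int. B #> (t (r i) \<otimes> x [^] e) = B #> t i)" for i
  define \<sigma> where "\<sigma> i = idx n t (t i \<otimes> x)" for i
  have Rii: "\<And>i. i < n \<Longrightarrow> R i i"
  proof -
    fix i assume i: "i < n"
    have "t i \<otimes> x [^] (0::int) = t i" using tc[OF i] by simp
    hence "B #> (t i \<otimes> x [^] (0::int)) = B #> t i" by simp
    thus "R i i" unfolding R_def using i by (intro conjI exI)
  qed
  have Rr: "\<And>i. i < n \<Longrightarrow> R (r i) i" unfolding r_def using Rii by (rule LeastI)
  have rn: "\<And>i. i < n \<Longrightarrow> r i < n" using Rr unfolding R_def by blast
  have dprop: "\<And>i. i < n \<Longrightarrow> B #> (t (r i) \<otimes> x [^] d i) = B #> t i"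
  proof -
    fix i assume i: "i < n"
    have "\<exists>e::int. B #> (t (r i) \<otimes> x [^] e) = B #> t i" using Rr[OF i] unfolding R_def by blast
    thus "B #> (t (r i) \<otimes> x [^] d i) = B #> t i" unfolding d_def by (rule someI_ex)
  qed
  have \<sigma>n: "\<And>i. i < n \<Longrightarrow> \<sigma> i < n" unfolding \<sigma>_def by (rule idx_less[OF rt]) (simp add: tc xc)
  have \<sigma>c: "\<And>i. i < n \<Longrightarrow> B #> t (\<sigma> i) = B #> (t i \<otimes> x)"
    unfolding \<sigma>_def by (rule idx_coset[OF rt, symmetric]) (simp add: tc xc)
  have Rshift: "\<And>i j. i < n \<Longrightarrow> R j (\<sigma> i) \<longleftrightarrow> R j i"
  proof -
    fix i j assume i: "i < n"
    show "R j (\<sigma> i) \<longleftrightarrow> R j i"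
    proof
      assume "R j (\<sigma> i)"
      then obtain e :: int where j: "j < n" and e: "B #> (t j \<otimes> x [^] e) = B #> t (\<sigma> i)"
        unfolding R_def by blast
      have tj: "t j \<in> carrier G" using tc[OF j] .
      have "x [^] (e - 1) \<otimes> x = x [^] e"
        using int_pow_mult[OF xc, of "e - 1" 1] xc by simp
      hence X: "B #> (t j \<otimes> x [^] (e - 1) \<otimes> x) = B #> (t i \<otimes> x)"
        using e \<sigma>c[OF i] tj xc by (simp add: m_assoc)
      have "B #> (t j \<otimes> x [^] (e - 1)) = B #> t i"
        by (rule coset_cancel[OF _ _ xc X]) (simp_all add: tj xc tc[OF i])
      thus "R j i" unfolding R_def using j by blast
    next
      assume "R j i"
      then obtain e :: int where j: "j < n" and e: "B #> (t j \<otimes> x [^] e) = B #> t i"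
        unfolding R_def by blast
      have tj: "t j \<in> carrier G" using tc[OF j] .
      have xe: "x [^] e \<otimes> x = x [^] (e + 1)"
        using int_pow_mult[OF xc, of e 1] xc by simp
      have "B #> (t j \<otimes> x [^] (e + 1)) = (B #> (t j \<otimes> x [^] e)) #> x"
        using tj xc B_carrier by (simp add: coset_mult_assoc m_assoc xe[symmetric])
      also have "\<dots> = (B #> t i) #> x" using e by simp
      also have "\<dots> = B #> t (\<sigma> i)" using \<sigma>c[OF i] tc[OF i] xc B_carrier by (simp add: coset_mult_assoc)
      finally show "R j (\<sigma> i)" unfolding R_def using j by blast
    qed
  qed
  have r\<sigma>: "\<And>i. i < n \<Longrightarrow> r (\<sigma> i) = r i" unfolding r_def using Rshift by simp
  define t' where "t' i = t (r i) \<otimes> x [^] d i" for i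
  have t'c: "\<And>i. i < n \<Longrightarrow> t' i \<in> carrier G" unfolding t'_def using tc[OF rn] xc by simp
  have t'co: "\<And>i. i < n \<Longrightarrow> B #> t' i = B #> t i" unfolding t'_def using dprop .
  have rt': "right_transversal G B n t'"
    unfolding right_transversal_def
  proof
    show "\<forall>i<n. t' i \<in> carrier G" using t'c by blast
    have b: "bij_betw (\<lambda>i. B #> t i) {..<n} (rcosets B)" using rt unfolding right_transversal_def by (rule conjunct2)
    have eq: "\<And>i. i \<in> {..<n} \<Longrightarrow> B #> t' i = B #> t i" using t'co by simp
    show "bij_betw (\<lambda>i. B #> t' i) {..<n} (rcosets B)"
      using bij_betw_cong[of "{..<n}" "\<lambda>i. B #> t' i" "\<lambda>i. B #> t i" "rcosets B", OF eq] b by simp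
  qed
  have idx': "\<And>i. i < n \<Longrightarrow> idx n t' (t' i \<otimes> x) = \<sigma> i"
  proof -
    fix i assume i: "i < n"
    have "B #> (t' i \<otimes> x) = (B #> t' i) #> x" using t'c[OF i] xc B_carrier by (simp add: coset_mult_assoc)
    also have "\<dots> = (B #> t i) #> x" using t'co[OF i] by simp
    also have "\<dots> = B #> (t i \<otimes> x)" using tc[OF i] xc B_carrier by (simp add: coset_mult_assoc)
    also have "\<dots> = B #> t (\<sigma> i)" using \<sigma>c[OF i] by simp
    also have "\<dots> = B #> t' (\<sigma> i)" using t'co[OF \<sigma>n[OF i]] by simp
    finally have e: "B #> (t' i \<otimes> x) = B #> t' (\<sigma> i)" .
    show "idx n t' (t' i \<otimes> x) = \<sigma> i" by (rule idx_eq[OF rt' _ \<sigma>n[OF i] e]) (simp add: t'c[OF i] xc)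
  qed
  define e where "e i = d i + 1 - d (\<sigma> i)" for i
  have bb': "\<And>i. i < n \<Longrightarrow> bb n t' x i = t (r i) \<otimes> x [^] e i \<otimes> inv (t (r i))"
  proof -
    fix i assume i: "i < n"
    have T: "t (r i) \<in> carrier G" using tc[OF rn[OF i]] .
    have "bb n t' x i = t' i \<otimes> x \<otimes> inv (t' (\<sigma> i))" unfolding bb_def trep_idx idx'[OF i] ..
    also have "\<dots> = t (r i) \<otimes> x [^] d i \<otimes> x \<otimes> inv (t (r i) \<otimes> x [^] d (\<sigma> i))"
      unfolding t'_def r\<sigma>[OF i] ..
    also have "\<dots> = t (r i) \<otimes> (x [^] d i \<otimes> x \<otimes> inv (x [^] d (\<sigma> i))) \<otimes> inv (t (r i))"
      using T xc by (simp add: m_assoc inv_mult_group)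
    also have "x [^] d i \<otimes> x \<otimes> inv (x [^] d (\<sigma> i)) = x [^] e i"
      unfolding e_def by (rule ipow_shift[OF xc])
    finally show "bb n t' x i = t (r i) \<otimes> x [^] e i \<otimes> inv (t (r i))" .
  qed
  let ?z = "comm G WW x"
  have zc: "?z \<in> carrier G" using comm_closed[OF is_group WC xc] .
  have phib: "\<And>i. i < n \<Longrightarrow> comm G WW (bb n t' x i) = ?z [^] e i"
  proof -
    fix i assume i: "i < n"
    have T: "t (r i) \<in> carrier G" using tc[OF rn[OF i]] .
    show "comm G WW (bb n t' x i) = ?z [^] e i"
      unfolding bb'[OF i] phi_conj[OF marg_ipow[OF x] T] phi_ipow[OF x] ..
  qed
  have zB: "\<And>i. i < n \<Longrightarrow> ?z [^] e i \<in> B"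
    using phib[symmetric] comm_B[OF W_B] bb_B[OF rt' xc] by simp
  have "tau G B w ys n t x = tau G B w ys n t' x" using tau_indep[OF rt rt' xc] by (rule sym)
  also have "\<dots> = list_prod QQ (map (\<lambda>i. cc (bb n t' x i)) [0..<n])"
    unfolding tau_def cc_def bb_def ..
  also have "map (\<lambda>i. cc (bb n t' x i)) [0..<n] = map pp (map (\<lambda>i. ?z [^] e i) [0..<n])"
    unfolding map_map
  proof (rule map_cong[OF refl])
    fix i assume "i \<in> set [0..<n]"
    hence i: "i < n" by simp
    show "cc (bb n t' x i) = (pp \<circ> (\<lambda>i. ?z [^] e i)) i"
      unfolding comp_def cc_eq[OF bb_B[OF rt' xc i]] phib[OF i] ..
  qed
  also have "list_prod QQ (map pp (map (\<lambda>i. ?z [^] e i) [0..<n])) = pp (list_prod G (map (\<lambda>i. ?z [^] e i) [0..<n]))"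
    by (rule pp_list_prod) (use zB in auto)
  also have "list_prod G (map (\<lambda>i. ?z [^] e i) [0..<n]) = ?z [^] (sum_list (map e [0..<n]))"
    by (rule list_prod_pow[OF zc])
  also have "sum_list (map e [0..<n]) = int n"
  proof -
    have s: "sum_list (map e [0..<n]) = (\<Sum>i<n. e i)"
      using sum_set_upt_conv_sum_list_nat[of e 0 n] by (simp add: atLeast0LessThan)
    have bij: "bij_betw \<sigma> {..<n} {..<n}" unfolding \<sigma>_def by (rule perm_bij[OF rt xc])
    have "(\<Sum>i<n. d (\<sigma> i)) = (\<Sum>i<n. d i)" using sum.reindex_bij_betw[OF bij, of d] .
    moreover have "(\<Sum>i<n. e i) = (\<Sum>i<n. d i) + int n - (\<Sum>i<n. d (\<sigma> i))"
      unfolding e_def by (simp add: sum.distrib sum_subtractf)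
    ultimately show ?thesis using s by simp
  qed
  also have "?z [^] int n = comm G WW (x [^] n)" by (simp only: int_pow_int phi_pow[OF x])
  finally have main: "tau G B w ys n t x = pp (comm G WW (x [^] n))" .
  have "comm G WW (x [^] n) = ?z [^] n" by (rule phi_pow[OF x])
  also have "\<dots> = ?z [^] int n" by (rule int_pow_int[symmetric])
  also have "\<dots> = ?z [^] (sum_list (map e [0..<n]))" by (simp only: \<open>sum_list (map e [0..<n]) = int n\<close>)
  also have "\<dots> = list_prod G (map (\<lambda>i. ?z [^] e i) [0..<n])" by (rule list_prod_pow[OF zc, symmetric])
  finally have "comm G WW (x [^] n) = list_prod G (map (\<lambda>i. ?z [^] e i) [0..<n])" .
  moreover have "list_prod G (map (\<lambda>i. ?z [^] e i) [0..<n]) \<in> B"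
    by (rule list_prod_B) (use zB in auto)
  ultimately show ?thesis using main by simp
qed

end

theorem proposition3p4:
  fixes E :: "('a, 'b) monoid_scheme" and B :: "'a set" and w :: ocword
    and ys :: "'a list" and n :: nat and t :: "nat \<Rightarrow> 'a"
  assumes "group E"
    and "subgroup B E"
    and "finite (rcosets\<^bsub>E\<^esub> B)"
    and "card (rcosets\<^bsub>E\<^esub> B) = n"
    and "right_transversal E B n t"
    and "length ys = weight w"
    and "set ys \<subseteq> B"
  shows "(\<forall>x \<in> carrier E. \<forall>i < n.
            t i \<otimes>\<^bsub>E\<^esub> x \<otimes>\<^bsub>E\<^esub> inv\<^bsub>E\<^esub> (trep E B n t (t i \<otimes>\<^bsub>E\<^esub> x)) \<in> B)
       \<and> tau E B w ys n t \<in> hom E (BmodV E B w)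
       \<and> (\<forall>t'. right_transversal E B n t' \<longrightarrow>
              (\<forall>x \<in> carrier E. tau E B w ys n t' x = tau E B w ys n t x))
       \<and> (\<forall>x \<in> marginal E w.
              comm E (oc_eval E w ys) (x [^]\<^bsub>E\<^esub> n) \<in> B
            \<and> tau E B w ys n t x = natpi E B w (comm E (oc_eval E w ys) (x [^]\<^bsub>E\<^esub> n)))"
proof -
  interpret q: qs E B w ys using assms(1,2,6,7) by (simp add: qs_def qs_axioms_def)
  have rt: "right_transversal E B n t" by (rule assms(5))
  have c1: "\<forall>x \<in> carrier E. \<forall>i < n.
            t i \<otimes>\<^bsub>E\<^esub> x \<otimes>\<^bsub>E\<^esub> inv\<^bsub>E\<^esub> (trep E B n t (t i \<otimes>\<^bsub>E\<^esub> x)) \<in> B"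
    using q.bb_B[OF rt] unfolding q.bb_def by blast
  have c2: "tau E B w ys n t \<in> hom E (BmodV E B w)" by (rule q.tau_hom[OF rt])
  have c3: "\<forall>t'. right_transversal E B n t' \<longrightarrow>
              (\<forall>x \<in> carrier E. tau E B w ys n t' x = tau E B w ys n t x)"
    using q.tau_indep[OF rt] by blast
  have c4: "\<forall>x \<in> marginal E w.
              comm E (oc_eval E w ys) (x [^]\<^bsub>E\<^esub> n) \<in> B
            \<and> tau E B w ys n t x = natpi E B w (comm E (oc_eval E w ys) (x [^]\<^bsub>E\<^esub> n))"
    using q.tau_marginal[OF rt] by blast
  show ?thesis using c1 c2 c3 c4 by blast
qed

end
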